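(* $\left\|\begin{bmatrix}1&1&0&0\\0&1&1&0\\0&0&1&1\\0&0&1&0\end{bmatrix}\right\|_\bullet>\left\|\begin{bmatrix}1&1&0&0\\0&1&1&0\\0&0&1&1\\0&0&0&1\end{bmatrix}\right\|_\bullet$.
   Context: Fix $\mathbb F\in\{\mathbb R,\mathbb C\}$. For an $m\times n$ matrix $A$, the Schur norm is $\|A\|_\bullet=\sup\{\|A\bullet X\|: X\in M_{m,n}(\mathbb F),\ \|X\|\le1\}$, where $A\bullet X=[a_{ij}x_{ij}]$ is the entrywise product and $\|\cdot\|$ is the operator norm $\ell^2_n\to\ell^2_m$. *)

theory Defs
  imports "HOL-Analysis.Analysis"
begin

definition schur_prod :: "'a::times^'n^'m \<Rightarrow> 'a^'n^'m \<Rightarrow> 'a^'n^'m" where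
  "schur_prod A X = (\<chi> i j. A $ i $ j * X $ i $ j)"

text \<open>Operator norm l2 to l2 of a matrix (vec carries the Euclidean norm).\<close>
definition op_norm :: "'a::real_normed_field^'n^'m \<Rightarrow> real" where
  "op_norm A = onorm (\<lambda>x. A *v x)"

definition schur_norm :: "'a::real_normed_field^'n^'m \<Rightarrow> real" where
  "schur_norm A = (SUP X\<in>{X. op_norm X \<le> 1}. op_norm (schur_prod A X))"

end

theory Submission
  imports Defs
begin


lemma norm_vec_sq: "(norm (v::'a::real_normed_vector^'n))^2 = (\<Sum>i\<in>UNIV. (norm (v$i))^2)"
  by (simp add: norm_vec_def L2_set_def sum_nonneg)

lemma op_norm_bl: "bounded_linear (\<lambda>x. (M::'a::{euclidean_space,real_normed_field}^'n^'m) *v x)"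
  using matrix_vector_mul_bounded_linear by blast

lemma op_norm_ge: "norm ((M::'a::{euclidean_space,real_normed_field}^'n^'m) *v z) \<le> op_norm M * norm z"
  unfolding op_norm_def by (rule onorm[OF op_norm_bl])

lemma op_norm_nonneg: "0 \<le> op_norm (M::'a::{euclidean_space,real_normed_field}^'n^'m)"
  unfolding op_norm_def by (rule onorm_pos_le[OF op_norm_bl])

lemma schur_factor_vec:
  fixes S X :: "'a::{euclidean_space,real_normed_field}^'n^'m"
  assumes S: "\<And>i j. S$i$j = of_real (\<Sum>k\<in>K. x i k * y j k)" and fin: "finite K"
    and xa: "\<And>i. (\<Sum>k\<in>K. (x i k)^2) \<le> a^2" and yb: "\<And>j. (\<Sum>k\<in>K. (y j k)^2) \<le> b^2"
    and a: "0 \<le> a" and b: "0 \<le> b"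
  shows "norm (schur_prod S X *v z) \<le> a * b * op_norm X * norm z"
proof -
  define w where "w = schur_prod S X *v z"
  define zk where "zk k = (\<chi> j. y j k *\<^sub>R z$j)" for k
  define wk where "wk k = (\<chi> i. x i k *\<^sub>R w$i)" for k
  have wi: "w$i = (\<Sum>k\<in>K. x i k *\<^sub>R (X *v zk k)$i)" for i
  proof -
    have "w$i = (\<Sum>j\<in>UNIV. \<Sum>k\<in>K. (x i k * y j k) *\<^sub>R (X$i$j * z$j))"
      unfolding w_def matrix_vector_mult_def schur_prod_def
      by (simp add: S scaleR_conv_of_real sum_distrib_right mult.assoc)
    also have "\<dots> = (\<Sum>k\<in>K. \<Sum>j\<in>UNIV. (x i k * y j k) *\<^sub>R (X$i$j * z$j))"
      by (rule sum.swap)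
    also have "\<dots> = (\<Sum>k\<in>K. x i k *\<^sub>R (X *v zk k)$i)"
      unfolding matrix_vector_mult_def zk_def
      by (simp add: scaleR_sum_right)
    finally show ?thesis .
  qed
  have "(norm w)^2 = w \<bullet> w" by (simp add: power2_norm_eq_inner)
  also have "\<dots> = (\<Sum>i\<in>UNIV. w$i \<bullet> w$i)" by (simp add: inner_vec_def)
  also have "\<dots> = (\<Sum>i\<in>UNIV. \<Sum>k\<in>K. (x i k *\<^sub>R w$i) \<bullet> (X *v zk k)$i)"
    by (subst (2) wi) (simp add: inner_sum_right)
  also have "\<dots> = (\<Sum>k\<in>K. wk k \<bullet> (X *v zk k))"
    by (subst sum.swap) (simp add: inner_vec_def wk_def)
  also have "\<dots> \<le> (\<Sum>k\<in>K. norm (wk k) * (op_norm X * norm (zk k)))"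
    apply (rule sum_mono)
    by (meson norm_cauchy_schwarz op_norm_ge mult_left_mono norm_ge_zero order_trans)
  also have "\<dots> = op_norm X * (\<Sum>k\<in>K. norm (wk k) * norm (zk k))"
    by (simp add: sum_distrib_left algebra_simps)
  finally have 1: "(norm w)^2 \<le> op_norm X * (\<Sum>k\<in>K. norm (wk k) * norm (zk k))" .
  have cs: "(\<Sum>k\<in>K. norm (wk k) * norm (zk k))^2 \<le> (\<Sum>k\<in>K. (norm (wk k))^2) * (\<Sum>k\<in>K. (norm (zk k))^2)"
    by (rule Cauchy_Schwarz_ineq_sum)
  have sw: "(\<Sum>k\<in>K. (norm (wk k))^2) \<le> a^2 * (norm w)^2"
  proof -
    have "(\<Sum>k\<in>K. (norm (wk k))^2) = (\<Sum>i\<in>UNIV. (norm (w$i))^2 * (\<Sum>k\<in>K. (x i k)^2))"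
      unfolding norm_vec_sq wk_def
      by (simp add: sum.swap[of _ K] sum_distrib_left power_mult_distrib mult.commute)
    also have "\<dots> \<le> (\<Sum>i\<in>UNIV. (norm (w$i))^2 * a^2)"
      by (rule sum_mono) (simp add: xa mult_left_mono)
    also have "\<dots> = a^2 * (norm w)^2" by (simp add: norm_vec_sq sum_distrib_left mult.commute)
    finally show ?thesis .
  qed
  have sz: "(\<Sum>k\<in>K. (norm (zk k))^2) \<le> b^2 * (norm z)^2"
  proof -
    have "(\<Sum>k\<in>K. (norm (zk k))^2) = (\<Sum>j\<in>UNIV. (norm (z$j))^2 * (\<Sum>k\<in>K. (y j k)^2))"
      unfolding norm_vec_sq zk_def
      by (simp add: sum.swap[of _ K] sum_distrib_left power_mult_distrib mult.commute)
    also have "\<dots> \<le> (\<Sum>j\<in>UNIV. (norm (z$j))^2 * b^2)"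
      by (rule sum_mono) (simp add: yb mult_left_mono)
    also have "\<dots> = b^2 * (norm z)^2" by (simp add: norm_vec_sq sum_distrib_left mult.commute)
    finally show ?thesis .
  qed
  have X0: "0 \<le> op_norm X" by (rule op_norm_nonneg)
  have "((norm w)^2)^2 \<le> (op_norm X)^2 * (\<Sum>k\<in>K. norm (wk k) * norm (zk k))^2"
  proof -
    have "0 \<le> (norm w)^2" by simp
    from power_mono[OF 1 this, of 2] show ?thesis by (simp add: power_mult_distrib)
  qed
  also have "\<dots> \<le> (op_norm X)^2 * ((a^2 * (norm w)^2) * (b^2 * (norm z)^2))"
    apply (rule mult_left_mono[OF _ zero_le_power2])
    apply (rule order_trans[OF cs])
    apply (rule mult_mono[OF sw sz]) by (simp_all add: sum_nonneg)
  finally have 2: "((norm w)^2)^2 \<le> (norm w)^2 * (a * b * op_norm X * norm z)^2"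
    by (simp add: power_mult_distrib algebra_simps)
  have "(norm w)^2 \<le> (a * b * op_norm X * norm z)^2"
  proof (cases "norm w = 0")
    case True then show ?thesis by simp
  next
    case False
    then have "0 < (norm w)^2" by simp
    with 2 show ?thesis by (simp add: power2_eq_square mult_le_cancel_left)
  qed
  then have "norm w \<le> a * b * op_norm X * norm z"
    by (rule power2_le_imp_le) (simp add: a b X0)
  then show ?thesis by (simp add: w_def)
qed


lemma schur_factor:
  fixes S X :: "'a::{euclidean_space,real_normed_field}^'n^'m"
  assumes S: "\<And>i j. S$i$j = of_real (\<Sum>k\<in>K. d k * x i k * y j k)" and fin: "finite K"
    and d: "\<And>k. 0 \<le> d k"
    and xa: "\<And>i. (\<Sum>k\<in>K. d k * (x i k)^2) \<le> a^2" and yb: "\<And>j. (\<Sum>k\<in>K. d k * (y j k)^2) \<le> b^2"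
    and a: "0 \<le> a" and b: "0 \<le> b"
  shows "op_norm (schur_prod S X) \<le> a * b * op_norm X"
  unfolding op_norm_def[of "schur_prod S X"]
proof (rule onorm_bound)
  show "0 \<le> a * b * op_norm X" using a b op_norm_nonneg[of X] by simp
  fix z
  show "norm (schur_prod S X *v z) \<le> a * b * op_norm X * norm z"
  proof (rule schur_factor_vec[where x="\<lambda>i k. sqrt (d k) * x i k" and y="\<lambda>j k. sqrt (d k) * y j k" and K=K])
    fix i j
    have e: "(sqrt (d k) * x i k) * (sqrt (d k) * y j k) = d k * x i k * y j k" for k
    proof -
      have "sqrt (d k) * sqrt (d k) = d k" using d[of k] by simp
      then show ?thesis by (metis mult.assoc mult.left_commute)
    qed
    show "S$i$j = of_real (\<Sum>k\<in>K. (sqrt (d k) * x i k) * (sqrt (d k) * y j k))"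
      unfolding e by (rule S)
  next
    fix i show "(\<Sum>k\<in>K. (sqrt (d k) * x i k)^2) \<le> a^2"
      using xa d by (simp add: power_mult_distrib)
  next
    fix j show "(\<Sum>k\<in>K. (sqrt (d k) * y j k)^2) \<le> b^2"
      using yb d by (simp add: power_mult_distrib)
  qed (use fin a b in auto)
qed

lemma op_norm_zero: "op_norm (0::'a::{euclidean_space,real_normed_field}^'n^'m) \<le> 1"
proof -
  have "(0::'a^'n^'m) *v x = 0" for x by (simp add: matrix_vector_mult_def vec_eq_iff)
  then show ?thesis unfolding op_norm_def by (intro onorm_bound) auto
qed

lemma schur_norm_upper:
  fixes S :: "'a::{euclidean_space,real_normed_field}^'n^'m"
  assumes S: "\<And>i j. S$i$j = of_real (\<Sum>k\<in>K. d k * x i k * y j k)" and fin: "finite K"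
    and d: "\<And>k. 0 \<le> d k"
    and xa: "\<And>i. (\<Sum>k\<in>K. d k * (x i k)^2) \<le> t" and yb: "\<And>j. (\<Sum>k\<in>K. d k * (y j k)^2) \<le> t"
    and t: "0 \<le> t"
  shows "schur_norm S \<le> t"
  unfolding schur_norm_def
proof (rule cSUP_least)
  have "(0::'a^'n^'m) \<in> {X. op_norm X \<le> 1}" using op_norm_zero by simp
  then show "{X::'a^'n^'m. op_norm X \<le> 1} \<noteq> {}" by auto
  fix X :: "'a^'n^'m" assume "X \<in> {X. op_norm X \<le> 1}"
  then have X: "op_norm X \<le> 1" by simp
  have "op_norm (schur_prod S X) \<le> sqrt t * sqrt t * op_norm X"
    by (rule schur_factor[OF S fin d]) (use xa yb t in auto)
  also have "\<dots> \<le> t" using X t op_norm_nonneg[of X] by (simp add: mult_left_le)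
  finally show "op_norm (schur_prod S X) \<le> t" .
qed

lemma schur_norm_bdd:
  fixes S :: "'a::{euclidean_space,real_normed_field}^'n^'m"
  assumes S: "\<And>i j. S$i$j = of_real (Sr i j)"
  shows "bdd_above ((\<lambda>X. op_norm (schur_prod S X)) ` {X. op_norm X \<le> 1})"
proof -
  define a where "a = sqrt (\<Sum>i\<in>UNIV. \<Sum>k\<in>UNIV. (Sr i k)^2)"
  have a0: "0 \<le> a" unfolding a_def by (simp add: sum_nonneg)
  have "op_norm (schur_prod S X) \<le> a" if X: "op_norm X \<le> 1" for X
  proof -
    have "op_norm (schur_prod S X) \<le> a * 1 * op_norm X"
    proof (rule schur_factor[where K=UNIV and d="\<lambda>_. 1" and x=Sr and y="\<lambda>j k. if k = j then 1 else 0"])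
      fix i j show "S$i$j = of_real (\<Sum>k\<in>UNIV. 1 * Sr i k * (if k = j then 1 else 0))"
        by (simp add: S if_distrib cong: if_cong)
    next
      fix i
      have "(\<Sum>k\<in>UNIV. (Sr i k)^2) \<le> (\<Sum>i\<in>UNIV. \<Sum>k\<in>UNIV. (Sr i k)^2)"
        by (rule member_le_sum[where f="\<lambda>i. \<Sum>k\<in>UNIV. (Sr i k)^2"]) (auto simp: sum_nonneg)
      then show "(\<Sum>k\<in>UNIV. 1 * (Sr i k)^2) \<le> a^2" unfolding a_def by (simp add: sum_nonneg)
    next
      fix j :: 'n
      show "(\<Sum>k\<in>UNIV. 1 * (if k = j then 1 else 0)^2) \<le> (1::real)^2"
      proof -
        have "(\<Sum>k\<in>UNIV. 1 * (if k = j then 1 else 0)^2) = (\<Sum>k\<in>UNIV. if k = j then 1 else (0::real))"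
          by (rule sum.cong) auto
        also have "\<dots> = 1" by (subst sum.delta) auto
        finally show ?thesis by simp
      qed
    qed (use a0 in auto)
    also have "\<dots> \<le> a" using X a0 op_norm_nonneg[of X] by (simp add: mult_left_le)
    finally show ?thesis .
  qed
  then show ?thesis by (auto simp: bdd_above_def)
qed

lemma inner_sums: "(\<Sum>j\<in>A. (a j) *\<^sub>R (z j)) \<bullet> (\<Sum>l\<in>A. (b l) *\<^sub>R (z l)) = (\<Sum>l\<in>A. \<Sum>n\<in>A. b l * (a n * ((z::_\<Rightarrow>'a::real_inner) n \<bullet> z l)))"
  by (simp add: inner_sum_left inner_sum_right sum_distrib_left mult.assoc)

lemma orth_op_norm:
  fixes X :: "'a::{euclidean_space,real_normed_field}^'n^'n"
  assumes X: "\<And>i j. X$i$j = of_real (Xr i j)"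
    and O: "\<And>j l. (\<Sum>i\<in>UNIV. Xr i j * Xr i l) = (if j = l then 1 else 0)"
  shows "op_norm X \<le> 1"
  unfolding op_norm_def
proof (rule onorm_bound)
  fix z :: "'a^'n"
  have c: "(X *v z)$i = (\<Sum>j\<in>UNIV. Xr i j *\<^sub>R z$j)" for i
    by (simp add: matrix_vector_mult_def X scaleR_conv_of_real)
  have "(norm (X *v z))^2 = (\<Sum>i\<in>UNIV. (X *v z)$i \<bullet> (X *v z)$i)"
    by (simp add: power2_norm_eq_inner inner_vec_def)
  also have "\<dots> = (\<Sum>i\<in>UNIV. \<Sum>l\<in>UNIV. \<Sum>j\<in>UNIV. Xr i l * (Xr i j * (z$j \<bullet> z$l)))"
    by (simp only: c inner_sums)
  also have "\<dots> = (\<Sum>l\<in>UNIV. \<Sum>i\<in>UNIV. \<Sum>j\<in>UNIV. Xr i l * (Xr i j * (z$j \<bullet> z$l)))"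
    by (rule sum.swap)
  also have "\<dots> = (\<Sum>l\<in>UNIV. \<Sum>j\<in>UNIV. \<Sum>i\<in>UNIV. Xr i l * (Xr i j * (z$j \<bullet> z$l)))"
    by (rule sum.cong[OF refl], rule sum.swap)
  also have "\<dots> = (\<Sum>l\<in>UNIV. \<Sum>j\<in>UNIV. (\<Sum>i\<in>UNIV. Xr i l * Xr i j) * (z$j \<bullet> z$l))"
    by (simp only: sum_distrib_right mult.assoc)
  also have "\<dots> = (\<Sum>l\<in>UNIV. \<Sum>j\<in>UNIV. (if l = j then z$j \<bullet> z$l else 0))"
    by (intro sum.cong refl) (simp add: O)
  also have "\<dots> = (\<Sum>l\<in>UNIV. z$l \<bullet> z$l)"
    by (simp add: sum.delta)
  also have "\<dots> = (norm z)^2" by (simp add: power2_norm_eq_inner inner_vec_def)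
  finally have "norm (X *v z) = norm z" by (simp add: power2_eq_iff_nonneg)
  then show "norm (X *v z) \<le> 1 * norm z" by simp
qed simp

lemma op_norm_lower:
  fixes M :: "'a::{euclidean_space,real_normed_field}^'n^'m"
  assumes M: "\<And>i j. M$i$j = of_real (Mr i j)" and c: "0 \<le> c"
    and ineq: "c^2 * (\<Sum>j\<in>UNIV. (zr j)^2) < (\<Sum>i\<in>UNIV. (\<Sum>j\<in>UNIV. Mr i j * zr j)^2)"
  shows "c < op_norm M"
proof (rule ccontr)
  assume "\<not> c < op_norm M"
  then have le: "op_norm M \<le> c" by simp
  define z :: "'a^'n" where "z = (\<chi> j. of_real (zr j))"
  have "(M *v z)$i = of_real (\<Sum>j\<in>UNIV. Mr i j * zr j)" for i
    by (simp add: matrix_vector_mult_def M z_def)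
  then have n1: "(norm (M *v z))^2 = (\<Sum>i\<in>UNIV. (\<Sum>j\<in>UNIV. Mr i j * zr j)^2)"
    by (simp only: norm_vec_sq norm_of_real power2_abs)
  have n2: "(norm z)^2 = (\<Sum>j\<in>UNIV. (zr j)^2)" by (simp add: norm_vec_sq z_def)
  have "norm (M *v z) \<le> c * norm z"
    by (rule order_trans[OF op_norm_ge]) (simp add: le mult_right_mono)
  then have "(norm (M *v z))^2 \<le> (c * norm z)^2" by (simp add: power_mono)
  then show False using n1 n2 ineq by (simp add: power_mult_distrib)
qed



lemma vector_4 [simp]:
  "(vector [a,b,c,d] :: ('a::zero)^4)$1 = a"
  "(vector [a,b,c,d] :: ('a::zero)^4)$2 = b"
  "(vector [a,b,c,d] :: ('a::zero)^4)$3 = c"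
  "(vector [a,b,c,d] :: ('a::zero)^4)$4 = d"
  unfolding vector_def by simp_all

definition dl :: "real list" where "dl = [154/125, 324231/308000, 51487407/54038500, 335755824667/411899256000, 218989998718/41969478083375, 1959740818231/1313939992308000, 1414654216221/979870409115500, 17658622948001/11317233729768000]"

definition dB :: "nat \<Rightarrow> real" where
  "dB k = (if k < length dl then dl ! k else 0)"

definition LB :: "real list list" where
  "LB = [[1, 0, 0, 0, 0, 0, 0, 0],
    [235/616, 1, 0, 0, 0, 0, 0, 0],
    [(-145/1232), 107865/216154, 1, 0, 0, 0, 0, 0],
    [145/1232, (-145/762), 126888355/205949628, 1, 0, 0, 0, 0],
    [125/154, (-117500/324231), 16647500/51487407, (-156560110000/335755824667), 1, 0, 0, 0],
    [125/154, 500/851, (-10318750/51487407), 48459125000/335755824667, (-158654203255/875959994872), 1, 0, 0],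
    [0, 308000/324231, 27072250/51487407, (-325000/2238029), 72880423285/1751919989744, (-45068646405/3919481636462), 1, 0],
    [0, 0, 54038500/51487407, 158122546000/335755824667, 225469576715/1751919989744, 338905646605/3919481636462, (-324994524935/5658616864884), 1]]"

definition idx4 :: "4 \<Rightarrow> nat" where "idx4 i = (vector [0,1,2,3] :: nat^4) $ i"

definition xB :: "4 \<Rightarrow> nat \<Rightarrow> real" where "xB i k = LB ! (idx4 i) ! k"
definition yB :: "4 \<Rightarrow> nat \<Rightarrow> real" where "yB j k = LB ! (idx4 j + 4) ! k"

definition Xm :: "real^4^4" where
  "Xm = vector [vector [81/95, 48/95, (-12/95), 4/95],
    vector [(-32/95), 69/95, 54/95, (-18/95)],
    vector [12/95, (-14/95), 51/95, 78/95],
    vector [36/95, (-42/95), 58/95, (-51/95)]]"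

definition Ar :: "real^4^4" where "Ar = vector [vector [1,1,0,0], vector [0,1,1,0], vector [0,0,1,1], vector [0,0,1,0]]"
definition Br :: "real^4^4" where "Br = vector [vector [1,1,0,0], vector [0,1,1,0], vector [0,0,1,1], vector [0,0,0,1]]"

lemma B_fact: "\<forall>i j. Br$i$j = (\<Sum>k\<in>{0,1,2,3,4,5,6,7::nat}. dB k * xB i k * yB j k)"
  unfolding forall_4 Br_def dB_def dl_def xB_def yB_def LB_def idx4_def
  by simp

lemma B_diag: "\<forall>i. (\<Sum>k\<in>{0,1,2,3,4,5,6,7::nat}. dB k * (xB i k)^2) = 154/125 \<and> (\<Sum>k\<in>{0,1,2,3,4,5,6,7::nat}. dB k * (yB i k)^2) = 154/125"
  unfolding forall_4 dB_def dl_def xB_def yB_def LB_def idx4_def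
  by (simp add: power2_eq_square)

lemma dB_nonneg: "0 \<le> dB k"
proof -
  have "\<forall>x\<in>set dl. 0 \<le> x" unfolding dl_def by simp
  then show ?thesis unfolding dB_def using nth_mem by auto
qed

lemma X_orth: "\<forall>j l. (\<Sum>i\<in>UNIV. Xm$i$j * Xm$i$l) = (if j = l then 1 else 0)"
  unfolding forall_4 Xm_def sum_4 by simp

lemma A_low: "(154/125)^2 * (\<Sum>j\<in>UNIV. ((vector [1,2,2,1] :: real^4)$j)^2)
   < (\<Sum>i\<in>UNIV. (\<Sum>j\<in>UNIV. (Ar$i$j * Xm$i$j) * (vector [1,2,2,1] :: real^4)$j)^2)"
  unfolding Ar_def Xm_def sum_4 by (simp add: power2_eq_square)

lemma main_ineq:
  "schur_norm (vector [vector [1,1,0,0], vector [0,1,1,0], vector [0,0,1,1], vector [0,0,1,0]] :: 'a::{euclidean_space,real_normed_field}^4^4)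
    > schur_norm (vector [vector [1,1,0,0], vector [0,1,1,0], vector [0,0,1,1], vector [0,0,0,1]] :: 'a^4^4)"
  (is "schur_norm ?A > schur_norm ?B")
proof -
  have "\<forall>i j. ?A$i$j = of_real (Ar$i$j)" unfolding forall_4 Ar_def by simp
  then have Aof: "\<And>i j. ?A$i$j = of_real (Ar$i$j)" by blast
  have "\<forall>i j. ?B$i$j = of_real (Br$i$j)" unfolding forall_4 Br_def by simp
  then have Bof: "\<And>i j. ?B$i$j = of_real (\<Sum>k\<in>{0,1,2,3,4,5,6,7::nat}. dB k * xB i k * yB j k)"
    using B_fact by simp
  have up: "schur_norm ?B \<le> 154/125"
    by (rule schur_norm_upper[OF Bof]) (use B_diag dB_nonneg in auto)
  define X :: "'a^4^4" where "X = (\<chi> i j. of_real (Xm$i$j))"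
  have Xn: "op_norm X \<le> 1"
    by (rule orth_op_norm[where Xr="\<lambda>i j. Xm$i$j"]) (use X_orth in \<open>auto simp: X_def\<close>)
  have low: "154/125 < op_norm (schur_prod ?A X)"
  proof (rule op_norm_lower[where Mr="\<lambda>i j. Ar$i$j * Xm$i$j" and zr="\<lambda>j. (vector [1,2,2,1] :: real^4)$j"])
    fix i j show "schur_prod ?A X $ i $ j = of_real (Ar$i$j * Xm$i$j)"
      by (simp add: schur_prod_def X_def Aof)
  next
    show "(154/125)^2 * (\<Sum>j\<in>UNIV. ((vector [1,2,2,1] :: real^4)$j)^2)
      < (\<Sum>i\<in>UNIV. (\<Sum>j\<in>UNIV. (Ar$i$j * Xm$i$j) * (vector [1,2,2,1] :: real^4)$j)^2)"
      by (rule A_low)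
  qed simp
  have "op_norm (schur_prod ?A X) \<le> schur_norm ?A"
    unfolding schur_norm_def
    by (rule cSUP_upper) (use Xn schur_norm_bdd[OF Aof] in auto)
  then show ?thesis using up low by linarith
qed


theorem proposition5p5:
  shows "schur_norm (vector [vector [1,1,0,0], vector [0,1,1,0], vector [0,0,1,1], vector [0,0,1,0]] :: real^4^4)
       > schur_norm (vector [vector [1,1,0,0], vector [0,1,1,0], vector [0,0,1,1], vector [0,0,0,1]] :: real^4^4)
    \<and> schur_norm (vector [vector [1,1,0,0], vector [0,1,1,0], vector [0,0,1,1], vector [0,0,1,0]] :: complex^4^4)
       > schur_norm (vector [vector [1,1,0,0], vector [0,1,1,0], vector [0,0,1,1], vector [0,0,0,1]] :: complex^4^4)"
  using main_ineq[where 'a=real] main_ineq[where 'a=complex] by blast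

end
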